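(* Let $n\neq 1$ be a real number, $k_n=n-1$, and $k_0,k_1,k_2\in\mathbb{R}$. On the phase space with canonical coordinates $(r,\phi,p_r,p_\phi)$, $r>0$, restricted to the open set where $\cos(k_n\phi)\neq 0$, consider $$H_{nc2}=\tfrac12 r^{2n}\Big(p_r^2+\tfrac{p_\phi^2}{r^2}\Big)+k_0r^{n-1}+r^{2k_n}\Big(\frac{k_1}{\cos^2(k_n\phi)}+k_2\frac{\sin(k_n\phi)}{\cos^2(k_n\phi)}\Big).$$ With $P_1=r^n\big(p_r\cos(k_n\phi)+\tfrac1r p_\phi\sin(k_n\phi)\big)$, the functions $$J_{c2}=p_\phi^2+2\Big(\frac{k_1}{\cos^2(k_n\phi)}+k_2\frac{\sin(k_n\phi)}{\cos^2(k_n\phi)}\Big),$$ $$J_{c3}=P_1p_\phi+k_0\sin(k_n\phi)+2k_1r^{k_n}\sec(k_n\phi)\tan(k_n\phi)+k_2r^{k_n}\big(\sec^2(k_n\phi)+\tan^2(k_n\phi)\big)$$ are constants of motion of $H_{nc2}$, i.e. $\{J_{c2},H_{nc2}\}=0$ and $\{J_{c3},H_{nc2}\}=0$; hence $H_{nc2}$ is superintegrable.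
   Context: The Poisson bracket is the canonical one in $(r,\phi,p_r,p_\phi)$. A constant of motion of $H$ is a function $F$ with $\{F,H\}=0$. *)

theory Defs
  imports "HOL-Analysis.Analysis"
begin

type_synonym phase_fun = "real \<Rightarrow> real \<Rightarrow> real \<Rightarrow> real \<Rightarrow> real"

definition d_r :: "phase_fun \<Rightarrow> phase_fun" where
  "d_r F r phi pr pphi = deriv (\<lambda>x. F x phi pr pphi) r"
definition d_phi :: "phase_fun \<Rightarrow> phase_fun" where
  "d_phi F r phi pr pphi = deriv (\<lambda>x. F r x pr pphi) phi"
definition d_pr :: "phase_fun \<Rightarrow> phase_fun" where
  "d_pr F r phi pr pphi = deriv (\<lambda>x. F r phi x pphi) pr"
definition d_pphi :: "phase_fun \<Rightarrow> phase_fun" where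
  "d_pphi F r phi pr pphi = deriv (\<lambda>x. F r phi pr x) pphi"

definition poisson :: "phase_fun \<Rightarrow> phase_fun \<Rightarrow> phase_fun" where
  "poisson F G r phi pr pphi =
     d_r F r phi pr pphi * d_pr G r phi pr pphi - d_pr F r phi pr pphi * d_r G r phi pr pphi
   + d_phi F r phi pr pphi * d_pphi G r phi pr pphi - d_pphi F r phi pr pphi * d_phi G r phi pr pphi"

definition H_nc2 :: "real \<Rightarrow> real \<Rightarrow> real \<Rightarrow> real \<Rightarrow> phase_fun" where
  "H_nc2 n k0 k1 k2 r phi pr pphi =
     (let kn = n - 1 in
      1/2 * r powr (2*n) * (pr^2 + pphi^2 / r^2) + k0 * r powr (n - 1)
      + r powr (2*kn) * (k1 / (cos (kn*phi))^2 + k2 * sin (kn*phi) / (cos (kn*phi))^2))"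

definition P1 :: "real \<Rightarrow> phase_fun" where
  "P1 n r phi pr pphi =
     (let kn = n - 1 in r powr n * (pr * cos (kn*phi) + (1/r) * pphi * sin (kn*phi)))"

definition J_c2 :: "real \<Rightarrow> real \<Rightarrow> real \<Rightarrow> real \<Rightarrow> phase_fun" where
  "J_c2 n k0 k1 k2 r phi pr pphi =
     (let kn = n - 1 in
      pphi^2 + 2 * (k1 / (cos (kn*phi))^2 + k2 * sin (kn*phi) / (cos (kn*phi))^2))"

definition J_c3 :: "real \<Rightarrow> real \<Rightarrow> real \<Rightarrow> real \<Rightarrow> phase_fun" where
  "J_c3 n k0 k1 k2 r phi pr pphi =
     (let kn = n - 1 in
      P1 n r phi pr pphi * pphi + k0 * sin (kn*phi)
      + 2 * k1 * r powr kn * (1 / cos (kn*phi)) * tan (kn*phi)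
      + k2 * r powr kn * ((1 / cos (kn*phi))^2 + (tan (kn*phi))^2))"

end

theory Submission
  imports Defs
begin

lemma alg3:
  fixes n k0 k1 k2 r pr pphi s c t :: real
  assumes "c \<noteq> 0" "r \<noteq> 0" "s^2 + c^2 = 1"
  shows "(
   n*(t)*pr* c*pphi+(n-1)*(t)*pphi^2* s/r
   +2*k1*(n-1)*(t)* s/(r*(c)^2)
   +k2*(n-1)*(t)*(1+(s)^2)/(r*(c)^2)) * ((t)^2 * r^2 * pr) - ((t)*r* c*pphi) * (n * (t)^2 * r * pr^2 + (n-1) * (t)^2 * pphi^2 / r + k0*(n-1)*(t)/r
     + 2*(n-1)*(t)^2 * (k1 + k2 * s) / (r * (c)^2)) + (
   (t)*r*(-pr* s*(n-1)+pphi* c*(n-1)/r)*pphi+k0*(n-1)* c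
   +2*k1*(t)*(n-1)*((c)^2+2*(s)^2)/(c)^3
   +k2*(t)*(n-1)*(2* s*((c)^2+1+(s)^2))/(c)^3) * ((t)^2 * pphi) - (
   (t)*r*pr* c+2*(t)*pphi* s) * ((t)^2 * (n-1) * (k2 * (c)^2 + 2 * s * (k1 + k2 * s)) / (c)^3) = 0"
  using assms
  apply (simp add: field_simps)
  apply algebra
  done

lemma pw1: "0 < (r::real) \<Longrightarrow> r powr (2*n-1) = (r powr (n-1))^2 * r"
proof -
  assume "0<r"
  have e: "2*n-1 = (n-1)+(n-1)+1" by simp
  have "r powr (2*n-1) = r powr (n-1) * r powr (n-1) * r powr 1"
    unfolding e by (simp only: powr_add)
  then show ?thesis using \<open>0<r\<close> by (simp add: power2_eq_square)
qed
lemma pw2: "0 < (r::real) \<Longrightarrow> r powr (2*n) = (r powr (n-1))^2 * r^2"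
proof -
  assume "0<r"
  have e: "2*n = (n-1)+(n-1)+1+1" by simp
  have "r powr (2*n) = r powr (n-1) * r powr (n-1) * r powr 1 * r powr 1"
    unfolding e by (simp only: powr_add)
  then show ?thesis using \<open>0<r\<close> by (simp add: power2_eq_square)
qed
lemma pw3: "0 < (r::real) \<Longrightarrow> r powr (n-2) = r powr (n-1) / r"
  using powr_diff[of r "n-1" 1] by simp
lemma pw4: "0 < (r::real) \<Longrightarrow> r powr (2*n-3) = (r powr (n-1))^2 / r"
proof -
  assume "0<r"
  have e: "2*n-3 = (n-1)+(n-1)-1" by simp
  have "r powr (2*n-3) = r powr (n-1) * r powr (n-1) / r powr 1"
    unfolding e by (simp only: powr_add powr_diff)
  then show ?thesis using \<open>0<r\<close> by (simp add: power2_eq_square)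
qed
lemma pw5: "0 < (r::real) \<Longrightarrow> r powr n = r powr (n-1) * r"
  using powr_add[of r "n-1" 1] by simp
lemma pw6: "0 < (r::real) \<Longrightarrow> r powr (2*(n-1)) = (r powr (n-1))^2"
  by (simp add: power2_eq_square powr_add[symmetric] algebra_simps)

lemma pw7: "0 < (r::real) \<Longrightarrow> r powr (n*2-2) = (r powr (n-1))^2"
  using pw6[of r n] by (simp add: algebra_simps)
lemma pw8: "0 < (r::real) \<Longrightarrow> r powr (n*2-1) = (r powr (n-1))^2 * r"
  using pw1[of r n] by (simp add: mult.commute)
lemma pw9: "0 < (r::real) \<Longrightarrow> r powr (n*2) = (r powr (n-1))^2 * r^2"
  using pw2[of r n] by (simp add: mult.commute)
lemma pw10: "0 < (r::real) \<Longrightarrow> r powr (n*2-3) = (r powr (n-1))^2 / r"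
  using pw4[of r n] by (simp add: mult.commute)

lemmas pws = pw1 pw2 pw3 pw4 pw5 pw6 pw7 pw8 pw9 pw10

context
  fixes n k0 k1 k2 r phi pr pphi :: real
  assumes r: "r > 0" and c: "cos ((n - 1) * phi) \<noteq> 0"
begin

lemma rne: "r \<noteq> 0" using r by simp
lemma c2: "(cos ((n - 1) * phi))^2 \<noteq> 0" using c by simp

lemma H_r: "d_r (H_nc2 n k0 k1 k2) r phi pr pphi =
     n * (r powr (n-1))^2 * r * pr^2 + (n-1) * (r powr (n-1))^2 * pphi^2 / r + k0*(n-1)*(r powr (n-1))/r
     + 2*(n-1)*(r powr (n-1))^2 * (k1 + k2 * sin ((n-1)*phi)) / (r * (cos ((n-1)*phi))^2)"
  unfolding d_r_def H_nc2_def Let_def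
  apply (rule DERIV_imp_deriv)
  apply (intro derivative_eq_intros refl)
  using r c by ((auto)?, (simp_all add: pws[where r=r and n=n])?, (simp_all add: field_simps)?,
     (simp_all add: algebra_simps eval_nat_numeral)?)

lemma H_pr: "d_pr (H_nc2 n k0 k1 k2) r phi pr pphi = (r powr (n-1))^2 * r^2 * pr"
  unfolding d_pr_def H_nc2_def Let_def pws[where r=r and n=n, OF r]
  apply (rule DERIV_imp_deriv)
  apply (intro derivative_eq_intros refl)
  using r c by ((auto)?, (simp_all add: pws[where r=r and n=n])?, (simp_all add: field_simps)?,
     (simp_all add: algebra_simps eval_nat_numeral)?)

lemma H_phi: "d_phi (H_nc2 n k0 k1 k2) r phi pr pphi =
   (r powr (n-1))^2 * (n-1) * (k2 * (cos ((n-1)*phi))^2 + 2 * sin ((n-1)*phi) * (k1 + k2 * sin ((n-1)*phi))) / (cos ((n-1)*phi))^3"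
  unfolding d_phi_def H_nc2_def Let_def pws[where r=r and n=n, OF r]
  apply (rule DERIV_imp_deriv)
  apply (intro derivative_eq_intros refl)
  using r c by ((auto)?, (simp_all add: pws[where r=r and n=n])?, (simp_all add: field_simps)?,
     (simp_all add: algebra_simps eval_nat_numeral)?)

lemma H_pphi: "d_pphi (H_nc2 n k0 k1 k2) r phi pr pphi = (r powr (n-1))^2 * pphi"
  unfolding d_pphi_def H_nc2_def Let_def pws[where r=r and n=n, OF r]
  apply (rule DERIV_imp_deriv)
  apply (intro derivative_eq_intros refl)
  using r c by ((auto)?, (simp_all add: pws[where r=r and n=n])?, (simp_all add: field_simps)?,
     (simp_all add: algebra_simps eval_nat_numeral)?)

lemma J2_r: "d_r (J_c2 n k0 k1 k2) r phi pr pphi = 0"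
  unfolding d_r_def J_c2_def Let_def by simp

lemma J2_pr: "d_pr (J_c2 n k0 k1 k2) r phi pr pphi = 0"
  unfolding d_pr_def J_c2_def Let_def by simp

lemma J2_phi: "d_phi (J_c2 n k0 k1 k2) r phi pr pphi =
   2 * (n-1) * (k2 * (cos ((n-1)*phi))^2 + 2 * sin ((n-1)*phi) * (k1 + k2 * sin ((n-1)*phi))) / (cos ((n-1)*phi))^3"
  unfolding d_phi_def J_c2_def Let_def
  apply (rule DERIV_imp_deriv)
  apply (intro derivative_eq_intros refl)
  using r c by ((auto)?, (simp_all add: pws[where r=r and n=n])?, (simp_all add: field_simps)?,
     (simp_all add: algebra_simps eval_nat_numeral)?)

lemma J2_pphi: "d_pphi (J_c2 n k0 k1 k2) r phi pr pphi = 2 * pphi"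
  unfolding d_pphi_def J_c2_def Let_def
  apply (rule DERIV_imp_deriv)
  apply (intro derivative_eq_intros refl)
  using r c by ((auto)?, (simp_all add: pws[where r=r and n=n])?, (simp_all add: field_simps)?,
     (simp_all add: algebra_simps eval_nat_numeral)?)

lemma J3_r: "d_r (J_c3 n k0 k1 k2) r phi pr pphi = id (
   n*(r powr (n-1))*pr* cos ((n-1)*phi)*pphi+(n-1)*(r powr (n-1))*pphi^2* sin ((n-1)*phi)/r
   +2*k1*(n-1)*(r powr (n-1))* sin ((n-1)*phi)/(r*(cos ((n-1)*phi))^2)
   +k2*(n-1)*(r powr (n-1))*(1+(sin ((n-1)*phi))^2)/(r*(cos ((n-1)*phi))^2))"
  unfolding d_r_def J_c3_def P1_def Let_def tan_def
  apply (rule DERIV_imp_deriv)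
  apply (rule derivative_eq_intros refl r rne)+
  using r c apply (simp_all add: pws[where r=r and n=n])
  apply (simp_all add: field_simps)
  apply (simp_all add: algebra_simps power2_eq_square eval_nat_numeral)
  done

lemma J3_pr: "d_pr (J_c3 n k0 k1 k2) r phi pr pphi = (r powr (n-1))*r* cos ((n-1)*phi)*pphi"
  unfolding d_pr_def J_c3_def P1_def Let_def tan_def pws[where r=r and n=n, OF r]
  apply (rule DERIV_imp_deriv)
  apply (intro derivative_eq_intros refl)
  using r c by ((auto)?, (simp_all add: pws[where r=r and n=n])?, (simp_all add: field_simps)?,
     (simp_all add: algebra_simps eval_nat_numeral)?)

lemma J3_phi: "d_phi (J_c3 n k0 k1 k2) r phi pr pphi = id (
   (r powr (n-1))*r*(-pr* sin ((n-1)*phi)*(n-1)+pphi* cos ((n-1)*phi)*(n-1)/r)*pphi+k0*(n-1)* cos ((n-1)*phi)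
   +2*k1*(r powr (n-1))*(n-1)*((cos ((n-1)*phi))^2+2*(sin ((n-1)*phi))^2)/(cos ((n-1)*phi))^3
   +k2*(r powr (n-1))*(n-1)*(2* sin ((n-1)*phi)*((cos ((n-1)*phi))^2+1+(sin ((n-1)*phi))^2))/(cos ((n-1)*phi))^3)"
  unfolding d_phi_def J_c3_def P1_def Let_def tan_def pws[where r=r and n=n, OF r]
  apply (rule DERIV_imp_deriv)
  apply (rule derivative_eq_intros refl r rne c c2)+
  using r c apply (simp_all)
  apply (simp add: power3_eq_cube power2_eq_square add_divide_distrib[symmetric] diff_divide_distrib[symmetric])
  apply (simp add: field_simps)
  using sin_cos_squared_add[of "n*phi-phi"] apply algebra
  done

lemma J3_pphi: "d_pphi (J_c3 n k0 k1 k2) r phi pr pphi = id (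
   (r powr (n-1))*r*pr* cos ((n-1)*phi)+2*(r powr (n-1))*pphi* sin ((n-1)*phi))"
  unfolding d_pphi_def J_c3_def P1_def Let_def tan_def pws[where r=r and n=n, OF r]
  apply (rule DERIV_imp_deriv)
  apply (rule derivative_eq_intros refl r rne c c2)+
  using r c apply (simp_all add: field_simps)
  done

end

theorem mainTheorem8:
  fixes n k0 k1 k2 r phi pr pphi :: real
  assumes "n \<noteq> 1" and "r > 0" and "cos ((n - 1) * phi) \<noteq> 0"
  shows "poisson (J_c2 n k0 k1 k2) (H_nc2 n k0 k1 k2) r phi pr pphi = 0
       \<and> poisson (J_c3 n k0 k1 k2) (H_nc2 n k0 k1 k2) r phi pr pphi = 0"
proof
  note L = H_r[OF assms(2,3)] H_pr[OF assms(2,3)] H_phi[OF assms(2,3)] H_pphi[OF assms(2,3)]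
    J2_r[OF assms(2,3)] J2_pr[OF assms(2,3)] J2_phi[OF assms(2,3)] J2_pphi[OF assms(2,3)]
    J3_r[OF assms(2,3)] J3_pr[OF assms(2,3)] J3_phi[OF assms(2,3)] J3_pphi[OF assms(2,3)]
  show "poisson (J_c2 n k0 k1 k2) (H_nc2 n k0 k1 k2) r phi pr pphi = 0"
    unfolding poisson_def L using assms(3) by (simp add: field_simps)
  show "poisson (J_c3 n k0 k1 k2) (H_nc2 n k0 k1 k2) r phi pr pphi = 0"
    unfolding poisson_def L id_apply
    by (rule alg3[where c="cos ((n-1)*phi)" and s="sin ((n-1)*phi)" and t="r powr (n-1)"])
       (use assms in simp_all)
qed

end
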